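(* Let $G=(V,E)$ be a simple graph and $v\in V$ with degree $d(v)$. Then $$P(\mathcal{H}_{\bullet G},\lambda)=(\lambda-1)P(\mathcal{H}_{\bullet(G-\{v\})},\lambda)+(\lambda-1)^{d(v)}P(\mathcal{H}_{\bullet(G-N[v])},\lambda),$$ where $N[v]$ is the closed neighbourhood of $v$ and $G-S$ denotes the graph obtained by deleting the vertex set $S$.
   Context: A hypergraph $\mathcal{H}=(\mathcal{V},\mathcal{E})$ consists of a finite vertex set $\mathcal{V}$ and a set $\mathcal{E}$ of subsets of $\mathcal{V}$, each of size at least $1$, called edges. For a positive integer $\lambda$, a weak proper $\lambda$-colouring of $\mathcal{H}$ is a map $\phi:\mathcal{V}\to\{1,\dots,\lambda\}$ such that $|\{\phi(v):v\in e\}|>1$ for every $e\in\mathcal{E}$. $P(\mathcal{H},\lambda)$ denotes the number of weak proper $\lambda$-colourings; it is a polynomial in $\lambda$. For a simple graph $G=(V,E)$ (possibly with empty vertex set), $\mathcal{H}_{\bullet G}$ is the hypergraph with vertex set $V\cup\{w\}$, $w\notin V$ a new vertex, and edge set $\{\{u,v,w\}:uv\in E\}$. *)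

theory Defs
  imports Main "HOL-Library.FuncSet"
begin

definition simple_graph :: "'a set \<Rightarrow> 'a set set \<Rightarrow> bool" where
  "simple_graph V E \<longleftrightarrow> finite V \<and> (\<forall>e\<in>E. e \<subseteq> V \<and> card e = 2)"

definition weak_colourings :: "'b set \<Rightarrow> 'b set set \<Rightarrow> nat \<Rightarrow> ('b \<Rightarrow> nat) set" where
  "weak_colourings Vh Eh lam =
     {\<phi>. \<phi> \<in> Vh \<rightarrow>\<^sub>E {1..lam} \<and> (\<forall>e\<in>Eh. card (\<phi> ` e) > 1)}"

definition hchrom :: "'b set \<Rightarrow> 'b set set \<Rightarrow> nat \<Rightarrow> nat" where
  "hchrom Vh Eh lam = card (weak_colourings Vh Eh lam)"

text \<open>H_{bullet G}: vertices Some ` V plus the new vertex w = None;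
  edges {u,v,w} for every edge uv of G.\<close>
definition hbullet_V :: "'a set \<Rightarrow> 'a option set" where
  "hbullet_V V = Some ` V \<union> {None}"

definition hbullet_E :: "'a set set \<Rightarrow> 'a option set set" where
  "hbullet_E E = (\<lambda>e. insert None (Some ` e)) ` E"

definition P_bullet :: "'a set \<Rightarrow> 'a set set \<Rightarrow> nat \<Rightarrow> nat" where
  "P_bullet V E lam = hchrom (hbullet_V V) (hbullet_E E) lam"

definition del_V :: "'a set \<Rightarrow> 'a set \<Rightarrow> 'a set" where
  "del_V V S = V - S"

definition del_E :: "'a set set \<Rightarrow> 'a set \<Rightarrow> 'a set set" where
  "del_E E S = {e \<in> E. e \<inter> S = {}}"

definition degree :: "'a set set \<Rightarrow> 'a \<Rightarrow> nat" where
  "degree E v = card {e \<in> E. v \<in> e}"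

definition closed_nbhd :: "'a set set \<Rightarrow> 'a \<Rightarrow> 'a set" where
  "closed_nbhd E v = insert v {u. {u, v} \<in> E}"

end

theory Submission imports Defs begin

lemma card_ext:
  assumes disj: "A \<inter> X = {}" and fX: "finite X" and fT: "finite T"
  and Sext: "S \<subseteq> extensional (A \<union> X)" and Text: "T \<subseteq> extensional A"
  and res: "\<And>\<phi>. \<phi>\<in>S \<Longrightarrow> restrict \<phi> A \<in> T \<and> restrict \<phi> X \<in> PiE X (D (restrict \<phi> A))"
  and mer: "\<And>\<psi> g. \<psi>\<in>T \<Longrightarrow> g \<in> PiE X (D \<psi>) \<Longrightarrow> (\<lambda>x. if x\<in>A then \<psi> x else g x) \<in> S"
  and fD: "\<And>\<psi> x. \<psi>\<in>T \<Longrightarrow> x\<in>X \<Longrightarrow> finite (D \<psi> x)"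
  and kD: "\<And>\<psi> x. \<psi>\<in>T \<Longrightarrow> x\<in>X \<Longrightarrow> card (D \<psi> x) = k x"
  shows "card S = card T * (\<Prod>x\<in>X. k x)"
proof -
  let ?F = "\<lambda>\<phi>. (restrict \<phi> A, restrict \<phi> X)"
  let ?G = "\<lambda>(\<psi>,g). (\<lambda>x. if x\<in>A then \<psi> x else g x)"
  have "bij_betw ?F S (Sigma T (\<lambda>\<psi>. PiE X (D \<psi>)))"
  proof (rule bij_betwI[where g = ?G])
    show "?F \<in> S \<rightarrow> Sigma T (\<lambda>\<psi>. PiE X (D \<psi>))" using res by auto
    show "?G \<in> Sigma T (\<lambda>\<psi>. PiE X (D \<psi>)) \<rightarrow> S" using mer by auto
    show "?G (?F x) = x" if "x \<in> S" for x
    proof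
      fix y show "?G (?F x) y = x y"
        using Sext that by (auto simp: extensional_def)
    qed
    show "?F (?G y) = y" if "y \<in> Sigma T (\<lambda>\<psi>. PiE X (D \<psi>))" for y
    proof (cases y)
      case (Pair \<psi> g)
      have "restrict (?G y) A = \<psi>"
      proof
        fix z show "restrict (?G y) A z = \<psi> z"
          using Text that Pair by (auto simp: extensional_def)
      qed
      moreover have "restrict (?G y) X = g"
      proof
        fix z show "restrict (?G y) X z = g z"
          using that Pair disj by (auto simp: PiE_def extensional_def)
      qed
      ultimately show ?thesis using Pair by simp
    qed
  qed
  hence "card S = card (Sigma T (\<lambda>\<psi>. PiE X (D \<psi>)))" by (rule bij_betw_same_card)
  also have "\<dots> = (\<Sum>\<psi>\<in>T. card (PiE X (D \<psi>)))"
    using fT fX fD by (auto intro!: card_SigmaI finite_PiE)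
  also have "\<dots> = (\<Sum>\<psi>\<in>T. \<Prod>x\<in>X. k x)"
    using fX kD by (auto intro!: sum.cong prod.cong simp: card_PiE)
  finally show ?thesis by simp
qed

lemma card_img_gt1:
  assumes "finite e"
  shows "card (\<phi> ` insert None (Some ` e)) > 1 \<longleftrightarrow> (\<exists>x\<in>e. \<phi> (Some x) \<noteq> \<phi> None)"
proof
  assume "card (\<phi> ` insert None (Some ` e)) > 1"
  show "\<exists>x\<in>e. \<phi> (Some x) \<noteq> \<phi> None"
  proof (rule ccontr)
    assume "\<not> ?thesis"
    hence "\<phi> ` insert None (Some ` e) = {\<phi> None}" by auto
    hence "card (\<phi> ` insert None (Some ` e)) = card {\<phi> None}" by (rule arg_cong)
    thus False using \<open>card _ > 1\<close> by simp
  qed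
next
  assume "\<exists>x\<in>e. \<phi> (Some x) \<noteq> \<phi> None"
  then obtain x where x: "x \<in> e" "\<phi> (Some x) \<noteq> \<phi> None" by blast
  have "{\<phi> None, \<phi> (Some x)} \<subseteq> \<phi> ` insert None (Some ` e)" using x by auto
  hence "card {\<phi> None, \<phi> (Some x)} \<le> card (\<phi> ` insert None (Some ` e))"
    using assms by (intro card_mono) auto
  thus "card (\<phi> ` insert None (Some ` e)) > 1" using x by simp
qed

lemma wc_char:
  assumes "\<forall>e\<in>E. finite e"
  shows "weak_colourings (hbullet_V V) (hbullet_E E) lam =
    {\<phi> \<in> hbullet_V V \<rightarrow>\<^sub>E {1..lam}. \<forall>e\<in>E. \<exists>x\<in>e. \<phi> (Some x) \<noteq> \<phi> None}"
proof -
  have "\<And>\<phi>::'a option \<Rightarrow> nat. (\<forall>e'\<in>hbullet_E E. card (\<phi> ` e') > 1) \<longleftrightarrow> (\<forall>e\<in>E. \<exists>x\<in>e. \<phi> (Some x) \<noteq> \<phi> None)"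
  proof -
    fix \<phi> :: "'a option \<Rightarrow> nat"
    have "(\<forall>e'\<in>hbullet_E E. card (\<phi> ` e') > 1) \<longleftrightarrow> (\<forall>e\<in>E. card (\<phi> ` insert None (Some ` e)) > 1)"
      unfolding hbullet_E_def by blast
    also have "\<dots> \<longleftrightarrow> (\<forall>e\<in>E. \<exists>x\<in>e. \<phi> (Some x) \<noteq> \<phi> None)"
      using assms card_img_gt1 by blast
    finally show "?thesis \<phi>" .
  qed
  thus ?thesis unfolding weak_colourings_def by blast
qed

lemma part1:
  assumes fV: "finite V" and EV: "\<forall>e\<in>E. e \<subseteq> V \<and> finite e" and vV: "v \<in> V"
  shows "card {\<phi> \<in> weak_colourings (hbullet_V V) (hbullet_E E) lam. \<phi> (Some v) \<noteq> \<phi> None}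
     = P_bullet (del_V V {v}) (del_E E {v}) lam * (lam - 1)"
proof -
  let ?A = "hbullet_V (V - {v})" and ?X = "{Some v}"
  let ?T = "weak_colourings (hbullet_V (V - {v})) (hbullet_E (del_E E {v})) lam"
  let ?D = "\<lambda>\<psi> (x::'a option). {1..lam} - {\<psi> None}"
  have fin2: "\<forall>e\<in>del_E E {v}. finite e" using EV by (auto simp: del_E_def)
  have T: "?T = {\<phi> \<in> ?A \<rightarrow>\<^sub>E {1..lam}. \<forall>e\<in>del_E E {v}. \<exists>x\<in>e. \<phi> (Some x) \<noteq> \<phi> None}"
    by (rule wc_char[OF fin2])
  have W: "weak_colourings (hbullet_V V) (hbullet_E E) lam
     = {\<phi> \<in> hbullet_V V \<rightarrow>\<^sub>E {1..lam}. \<forall>e\<in>E. \<exists>x\<in>e. \<phi> (Some x) \<noteq> \<phi> None}"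
    using EV by (intro wc_char) auto
  have AX: "?A \<union> ?X = hbullet_V V" using vV by (auto simp: hbullet_V_def)
  have NA: "None \<in> ?A" by (simp add: hbullet_V_def)
  have "card {\<phi> \<in> weak_colourings (hbullet_V V) (hbullet_E E) lam. \<phi> (Some v) \<noteq> \<phi> None}
      = card ?T * (\<Prod>x\<in>?X. lam - 1)"
  proof (rule card_ext[where D = ?D])
    show "?A \<inter> ?X = {}" by (auto simp: hbullet_V_def)
    show "finite ?X" by simp
    show "finite ?T" unfolding T using fV
      by (intro finite_subset[OF _ finite_PiE[of ?A "\<lambda>_. {1..lam}"]]) (auto simp: hbullet_V_def)
    show "{\<phi> \<in> weak_colourings (hbullet_V V) (hbullet_E E) lam. \<phi> (Some v) \<noteq> \<phi> None} \<subseteq> extensional (?A \<union> ?X)"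
      unfolding AX W by (auto simp: PiE_def)
    show "?T \<subseteq> extensional ?A" unfolding T by (auto simp: PiE_def)
  next
    fix \<phi> assume "\<phi> \<in> {\<phi> \<in> weak_colourings (hbullet_V V) (hbullet_E E) lam. \<phi> (Some v) \<noteq> \<phi> None}"
    hence ph: "\<phi> \<in> hbullet_V V \<rightarrow>\<^sub>E {1..lam}" "\<forall>e\<in>E. \<exists>x\<in>e. \<phi> (Some x) \<noteq> \<phi> None"
      "\<phi> (Some v) \<noteq> \<phi> None" unfolding W by auto
    have "restrict \<phi> ?A \<in> ?A \<rightarrow>\<^sub>E {1..lam}" using ph(1) AX by auto
    moreover have "\<forall>e\<in>del_E E {v}. \<exists>x\<in>e. restrict \<phi> ?A (Some x) \<noteq> restrict \<phi> ?A None"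
    proof
      fix e assume e: "e \<in> del_E E {v}"
      then obtain x where x: "x \<in> e" "\<phi> (Some x) \<noteq> \<phi> None" using ph(2) by (auto simp: del_E_def)
      have "Some x \<in> ?A" using x e EV by (auto simp: del_E_def hbullet_V_def)
      thus "\<exists>x\<in>e. restrict \<phi> ?A (Some x) \<noteq> restrict \<phi> ?A None" using x NA by auto
    qed
    ultimately have "restrict \<phi> ?A \<in> ?T" unfolding T by blast
    moreover have "restrict \<phi> ?X \<in> PiE ?X (?D (restrict \<phi> ?A))"
      using ph NA AX by auto
    ultimately show "restrict \<phi> ?A \<in> ?T \<and> restrict \<phi> ?X \<in> PiE ?X (?D (restrict \<phi> ?A))" by blast
  next
    fix \<psi> g assume psi: "\<psi> \<in> ?T" and g: "g \<in> PiE ?X (?D \<psi>)"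
    let ?m = "\<lambda>x. if x \<in> ?A then \<psi> x else g x"
    have ps: "\<psi> \<in> ?A \<rightarrow>\<^sub>E {1..lam}" "\<forall>e\<in>del_E E {v}. \<exists>x\<in>e. \<psi> (Some x) \<noteq> \<psi> None"
      using psi unfolding T by auto
    have gv: "g (Some v) \<in> {1..lam}" "g (Some v) \<noteq> \<psi> None" using g by auto
    have vA: "Some v \<notin> ?A" by (auto simp: hbullet_V_def)
    have "?m \<in> hbullet_V V \<rightarrow>\<^sub>E {1..lam}"
      using ps(1) g gv AX[symmetric] by (auto simp: PiE_def extensional_def)
    moreover have "\<forall>e\<in>E. \<exists>x\<in>e. ?m (Some x) \<noteq> ?m None"
    proof
      fix e assume e: "e \<in> E"
      show "\<exists>x\<in>e. ?m (Some x) \<noteq> ?m None"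
      proof (cases "v \<in> e")
        case True thus ?thesis using vA NA gv by auto
      next
        case False
        hence "e \<in> del_E E {v}" using e by (auto simp: del_E_def)
        then obtain x where x: "x \<in> e" "\<psi> (Some x) \<noteq> \<psi> None" using ps(2) by blast
        have "Some x \<in> ?A" using x e EV False by (auto simp: hbullet_V_def)
        thus ?thesis using x NA by auto
      qed
    qed
    moreover have "?m (Some v) \<noteq> ?m None" using vA NA gv by auto
    ultimately show "?m \<in> {\<phi> \<in> weak_colourings (hbullet_V V) (hbullet_E E) lam. \<phi> (Some v) \<noteq> \<phi> None}"
      unfolding W by blast
  next
    fix \<psi> x assume "\<psi> \<in> ?T" "x \<in> ?X"
    show "finite (?D \<psi> x)" by simp
  next
    fix \<psi> x assume psi: "\<psi> \<in> ?T" "x \<in> ?X"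
    have "\<psi> None \<in> {1..lam}" using psi NA unfolding T by auto
    thus "card (?D \<psi> x) = lam - 1" by (simp add: card_Diff_singleton)
  qed
  thus ?thesis by (simp add: P_bullet_def hchrom_def del_V_def)
qed

lemma part2:
  assumes fV: "finite V" and EV: "\<forall>e\<in>E. e \<subseteq> V \<and> card e = 2" and vV: "v \<in> V"
  shows "card {\<phi> \<in> weak_colourings (hbullet_V V) (hbullet_E E) lam. \<phi> (Some v) = \<phi> None}
     = P_bullet (del_V V (closed_nbhd E v)) (del_E E (closed_nbhd E v)) lam * (lam - 1) ^ card {u. {u, v} \<in> E}"
proof -
  define N where "N = {u. {u, v} \<in> E}"
  define C where "C = insert v N"
  have Cdef: "closed_nbhd E v = C" by (simp add: C_def N_def closed_nbhd_def)
  have vN: "v \<notin> N" using EV by (auto simp: N_def)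
  have NV: "N \<subseteq> V" using EV by (auto simp: N_def)
  have fN: "finite N" using NV fV finite_subset by blast
  have finE: "\<forall>e\<in>E. finite e" using EV by (auto intro: card_ge_0_finite)
  let ?A = "hbullet_V (V - C)" and ?X = "Some ` C"
  let ?T = "weak_colourings (hbullet_V (V - C)) (hbullet_E (del_E E C)) lam"
  let ?D = "\<lambda>\<psi> (x::'a option). if x = Some v then {\<psi> None} else {1..lam} - {\<psi> None}"
  let ?k = "\<lambda>x::'a option. if x = Some v then 1 else lam - 1"
  let ?S = "{\<phi> \<in> weak_colourings (hbullet_V V) (hbullet_E E) lam. \<phi> (Some v) = \<phi> None}"
  have fin2: "\<forall>e\<in>del_E E C. finite e" using finE by (auto simp: del_E_def)
  have T: "?T = {\<phi> \<in> ?A \<rightarrow>\<^sub>E {1..lam}. \<forall>e\<in>del_E E C. \<exists>x\<in>e. \<phi> (Some x) \<noteq> \<phi> None}"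
    by (rule wc_char[OF fin2])
  have W: "weak_colourings (hbullet_V V) (hbullet_E E) lam
     = {\<phi> \<in> hbullet_V V \<rightarrow>\<^sub>E {1..lam}. \<forall>e\<in>E. \<exists>x\<in>e. \<phi> (Some x) \<noteq> \<phi> None}"
    using finE by (intro wc_char) auto
  have AX: "?A \<union> ?X = hbullet_V V" using vV NV by (auto simp: hbullet_V_def C_def)
  have NA: "None \<in> ?A" by (simp add: hbullet_V_def)
  have XA: "\<And>x. x \<in> C \<Longrightarrow> Some x \<notin> ?A" by (auto simp: hbullet_V_def)
  have "card ?S = card ?T * (\<Prod>x\<in>?X. ?k x)"
  proof (rule card_ext[where D = ?D])
    show "?A \<inter> ?X = {}" by (auto simp: hbullet_V_def)
    show "finite ?X" using fN by (simp add: C_def)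
    show "finite ?T" unfolding T using fV
      by (intro finite_subset[OF _ finite_PiE[of ?A "\<lambda>_. {1..lam}"]]) (auto simp: hbullet_V_def)
    show "?S \<subseteq> extensional (?A \<union> ?X)"
      unfolding AX W by (auto simp: PiE_def)
    show "?T \<subseteq> extensional ?A" unfolding T by (auto simp: PiE_def)
  next
    fix \<phi> assume "\<phi> \<in> ?S"
    hence ph: "\<phi> \<in> hbullet_V V \<rightarrow>\<^sub>E {1..lam}" "\<forall>e\<in>E. \<exists>x\<in>e. \<phi> (Some x) \<noteq> \<phi> None"
      "\<phi> (Some v) = \<phi> None" unfolding W by auto
    have "restrict \<phi> ?A \<in> ?A \<rightarrow>\<^sub>E {1..lam}" using ph(1) AX by auto
    moreover have "\<forall>e\<in>del_E E C. \<exists>x\<in>e. restrict \<phi> ?A (Some x) \<noteq> restrict \<phi> ?A None"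
    proof
      fix e assume e: "e \<in> del_E E C"
      then obtain x where x: "x \<in> e" "\<phi> (Some x) \<noteq> \<phi> None" using ph(2) by (auto simp: del_E_def)
      have "Some x \<in> ?A" using x e EV by (auto simp: del_E_def hbullet_V_def)
      thus "\<exists>x\<in>e. restrict \<phi> ?A (Some x) \<noteq> restrict \<phi> ?A None" using x NA by auto
    qed
    ultimately have "restrict \<phi> ?A \<in> ?T" unfolding T by blast
    moreover have "restrict \<phi> ?X \<in> PiE ?X (?D (restrict \<phi> ?A))"
    proof -
      have "\<phi> (Some u) \<in> {1..lam} - {\<phi> None}" if u: "u \<in> N" for u
      proof -
        have "{u, v} \<in> E" using u by (simp add: N_def)
        then obtain x where "x \<in> {u, v}" "\<phi> (Some x) \<noteq> \<phi> None" using ph(2) by blast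
        hence "\<phi> (Some u) \<noteq> \<phi> None" using ph(3) by auto
        moreover have "Some u \<in> hbullet_V V" using u NV by (auto simp: hbullet_V_def)
        ultimately show ?thesis using ph(1) by auto
      qed
      thus ?thesis using ph NA vN by (auto simp: C_def)
    qed
    ultimately show "restrict \<phi> ?A \<in> ?T \<and> restrict \<phi> ?X \<in> PiE ?X (?D (restrict \<phi> ?A))" by blast
  next
    fix \<psi> g assume psi: "\<psi> \<in> ?T" and g: "g \<in> PiE ?X (?D \<psi>)"
    let ?m = "\<lambda>x. if x \<in> ?A then \<psi> x else g x"
    have ps: "\<psi> \<in> ?A \<rightarrow>\<^sub>E {1..lam}" "\<forall>e\<in>del_E E C. \<exists>x\<in>e. \<psi> (Some x) \<noteq> \<psi> None"
      using psi unfolding T by auto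
    have pN: "\<psi> None \<in> {1..lam}" using ps(1) NA by auto
    have gv: "g (Some v) = \<psi> None"
    proof -
      have "g (Some v) \<in> ?D \<psi> (Some v)" using g by (rule PiE_mem) (simp add: C_def)
      thus ?thesis by simp
    qed
    have gu: "g (Some u) \<in> {1..lam}" "g (Some u) \<noteq> \<psi> None" if "u \<in> N" for u
    proof -
      have "g (Some u) \<in> ?D \<psi> (Some u)" using g by (rule PiE_mem) (simp add: C_def that)
      moreover have "u \<noteq> v" using that vN by auto
      ultimately show "g (Some u) \<in> {1..lam}" "g (Some u) \<noteq> \<psi> None" by auto
    qed
    have "?m \<in> hbullet_V V \<rightarrow>\<^sub>E {1..lam}"
    proof
      fix x assume x: "x \<in> hbullet_V V"
      show "?m x \<in> {1..lam}"
      proof (cases "x \<in> ?A")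
        case True thus ?thesis using ps(1) by auto
      next
        case False
        hence "x \<in> ?X" using x AX by blast
        then obtain c where c: "c \<in> C" "x = Some c" by blast
        thus ?thesis using False gv gu pN by (cases "c = v") (auto simp: C_def)
      qed
    next
      fix x assume x: "x \<notin> hbullet_V V"
      thus "?m x = undefined" using g AX by (auto simp: PiE_def extensional_def)
    qed
    moreover have "\<forall>e\<in>E. \<exists>x\<in>e. ?m (Some x) \<noteq> ?m None"
    proof
      fix e assume e: "e \<in> E"
      show "\<exists>x\<in>e. ?m (Some x) \<noteq> ?m None"
      proof (cases "e \<inter> C = {}")
        case True
        hence "e \<in> del_E E C" using e by (auto simp: del_E_def)
        then obtain x where x: "x \<in> e" "\<psi> (Some x) \<noteq> \<psi> None" using ps(2) by blast
        have "Some x \<in> ?A" using x e EV True by (auto simp: hbullet_V_def)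
        thus ?thesis using x NA by auto
      next
        case False
        then obtain y where y: "y \<in> e" "y \<in> C" by blast
        show ?thesis
        proof (cases "y = v")
          case False
          hence "y \<in> N" using y by (simp add: C_def)
          thus ?thesis using y XA gu NA by force
        next
          case True
          obtain a b where ab: "e = {a, b}" "a \<noteq> b" using EV e by (meson card_2_iff)
          obtain u where u: "e = {u, v}" "u \<noteq> v"
            using ab y True by auto
          hence "u \<in> N" using e by (simp add: N_def)
          hence "?m (Some u) \<noteq> ?m None" using XA[of u] gu NA by (auto simp: C_def)
          thus ?thesis using u by auto
        qed
      qed
    qed
    moreover have "?m (Some v) = ?m None" using XA[of v] NA gv by (auto simp: C_def)
    ultimately show "?m \<in> ?S" unfolding W by blast
  next
    fix \<psi> x assume "\<psi> \<in> ?T" "x \<in> ?X"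
    show "finite (?D \<psi> x)" by simp
  next
    fix \<psi> x assume psi: "\<psi> \<in> ?T" "x \<in> ?X"
    have "\<psi> None \<in> {1..lam}" using psi NA unfolding T by auto
    thus "card (?D \<psi> x) = ?k x" by (simp add: card_Diff_singleton)
  qed
  also have "(\<Prod>x\<in>?X. ?k x) = (lam - 1) ^ card N"
  proof -
    have "?X = insert (Some v) (Some ` N)" by (simp add: C_def)
    moreover have "Some v \<notin> Some ` N" using vN by auto
    ultimately have "(\<Prod>x\<in>?X. ?k x) = ?k (Some v) * (\<Prod>x\<in>Some ` N. ?k x)"
      using fN by simp
    also have "\<dots> = (\<Prod>x\<in>Some ` N. lam - 1)"
    proof -
      have "(\<Prod>x\<in>Some ` N. ?k x) = (\<Prod>x\<in>Some ` N. lam - 1)"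
        by (rule prod.cong) (use vN in auto)
      thus ?thesis by simp
    qed
    also have "\<dots> = (lam - 1) ^ card N" by (simp add: card_image)
    finally show ?thesis .
  qed
  finally show ?thesis by (simp add: P_bullet_def hchrom_def del_V_def Cdef N_def)
qed

lemma degree_eq:
  assumes EV: "\<forall>e\<in>E. card e = 2"
  shows "degree E v = card {u. {u, v} \<in> E}"
proof -
  have "bij_betw (\<lambda>u. {u, v}) {u. {u, v} \<in> E} {e \<in> E. v \<in> e}"
  proof (rule bij_betwI')
    fix x y assume "x \<in> {u. {u, v} \<in> E}" "y \<in> {u. {u, v} \<in> E}"
    hence "{x, v} \<in> E" "{y, v} \<in> E" by auto
    hence "card {x, v} = 2" "card {y, v} = 2" using EV by auto
    hence "x \<noteq> v" "y \<noteq> v" by auto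
    thus "({x, v} = {y, v}) = (x = y)" by (metis doubleton_eq_iff)
  next
    fix x assume "x \<in> {u. {u, v} \<in> E}" thus "{x, v} \<in> {e \<in> E. v \<in> e}" by auto
  next
    fix e assume e: "e \<in> {e \<in> E. v \<in> e}"
    have "card e = 2" using e EV by auto
    then obtain a b where ab: "e = {a, b}" "a \<noteq> b" unfolding card_2_iff by blast
    have "v = a \<or> v = b" using e ab by auto
    hence "\<exists>u. e = {u, v}"
    proof
      assume "v = a" thus ?thesis using ab by (intro exI[of _ b]) auto
    next
      assume "v = b" thus ?thesis using ab by (intro exI[of _ a]) auto
    qed
    thus "\<exists>x\<in>{u. {u, v} \<in> E}. e = {x, v}" using e by auto
  qed
  thus ?thesis unfolding degree_def by (simp add: bij_betw_same_card)
qed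

theorem proposition3:
  fixes V :: "'a set" and E :: "'a set set" and v :: 'a and lam :: nat
  assumes "simple_graph V E" and "v \<in> V" and "lam \<ge> 1"
  shows "int (P_bullet V E lam) =
           (int lam - 1) * int (P_bullet (del_V V {v}) (del_E E {v}) lam)
         + (int lam - 1) ^ degree E v
             * int (P_bullet (del_V V (closed_nbhd E v)) (del_E E (closed_nbhd E v)) lam)"
proof -
  have fV: "finite V" and EV: "\<forall>e\<in>E. e \<subseteq> V \<and> card e = 2"
    using assms(1) by (auto simp: simple_graph_def)
  have EV': "\<forall>e\<in>E. e \<subseteq> V \<and> finite e" using EV by (auto intro: card_ge_0_finite)
  let ?W = "weak_colourings (hbullet_V V) (hbullet_E E) lam"
  have fW: "finite ?W"
    using fV unfolding weak_colourings_def
    by (intro finite_subset[OF _ finite_PiE[of "hbullet_V V" "\<lambda>_. {1..lam}"]]) (auto simp: hbullet_V_def)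
  have eqW: "?W = {\<phi> \<in> ?W. \<phi> (Some v) \<noteq> \<phi> None} \<union> {\<phi> \<in> ?W. \<phi> (Some v) = \<phi> None}" by auto
  have "card ({\<phi> \<in> ?W. \<phi> (Some v) \<noteq> \<phi> None} \<union> {\<phi> \<in> ?W. \<phi> (Some v) = \<phi> None})
     = card {\<phi> \<in> ?W. \<phi> (Some v) \<noteq> \<phi> None} + card {\<phi> \<in> ?W. \<phi> (Some v) = \<phi> None}"
    by (rule card_Un_disjoint) (use fW in auto)
  hence "card ?W = card {\<phi> \<in> ?W. \<phi> (Some v) \<noteq> \<phi> None} + card {\<phi> \<in> ?W. \<phi> (Some v) = \<phi> None}"
    using arg_cong[OF eqW, of card] by (simp only:)
  also have "\<dots> = P_bullet (del_V V {v}) (del_E E {v}) lam * (lam - 1)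
     + P_bullet (del_V V (closed_nbhd E v)) (del_E E (closed_nbhd E v)) lam * (lam - 1) ^ degree E v"
  proof -
    have "degree E v = card {u. {u, v} \<in> E}" using EV by (intro degree_eq) auto
    thus ?thesis using part1[OF fV EV' assms(2)] part2[OF fV EV assms(2)] by simp
  qed
  finally have "P_bullet V E lam = \<dots>" by (simp add: P_bullet_def hchrom_def)
  hence "int (P_bullet V E lam) = int (P_bullet (del_V V {v}) (del_E E {v}) lam) * int (lam - 1)
     + int (P_bullet (del_V V (closed_nbhd E v)) (del_E E (closed_nbhd E v)) lam) * int (lam - 1) ^ degree E v"
    by (simp only: of_nat_add of_nat_mult of_nat_power)
  moreover have "int (lam - 1) = int lam - 1" using assms(3) by simp
  ultimately show ?thesis by (simp add: algebra_simps)
qed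

end
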